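(* Let $T_n$ be the transitive tournament on $n$ vertices. Its characteristic polynomial is $$\phi(T_n,t)=\det(tI-H(T_n))=\sum_{j=0}^{\lfloor n/2\rfloor}(-1)^j\binom{n}{2j}t^{n-2j}=\tfrac12(t+i)^n+\tfrac12(t-i)^n.$$ The eigenvalues of $H(T_n)$ (as a multiset) are $\sum_{k=1}^{(n-1)/2} 2\sin\frac{k(2j+1)\pi}{n}$, $j=0,\dots,n-1$, when $n$ is odd, and $(-1)^j+\sum_{k=1}^{(n-2)/2}2\sin\frac{k(2j+1)\pi}{n}$, $j=0,\dots,n-1$, when $n$ is even.
   Context: The transitive tournament $T_n$ has vertices $1,\dots,n$ and an arc $uv$ for every $u<v$. For a digraph $X$, the Hermitian adjacency matrix $H(X)$ has $(u,v)$-entry $1$ if $uv$ and $vu$ are arcs, $i$ if only $uv$ is an arc, $-i$ if only $vu$ is an arc, and $0$ otherwise. *)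

theory Defs
  imports Complex_Main "Jordan_Normal_Form.Char_Poly"
begin

(* A digraph on vertex set {1..n} is given by its arc relation arc u v ("uv is an arc").
   Hermitian adjacency matrix; matrix row/column index u (0-based) corresponds to vertex u+1. *)
definition herm_adj :: "nat \<Rightarrow> (nat \<Rightarrow> nat \<Rightarrow> bool) \<Rightarrow> complex mat" where
  "herm_adj n arc = mat n n (\<lambda>(u, v).
     if arc (u+1) (v+1) \<and> arc (v+1) (u+1) then 1
     else if arc (u+1) (v+1) then \<i>
     else if arc (v+1) (u+1) then - \<i>
     else 0)"

definition trans_tournament_arc :: "nat \<Rightarrow> nat \<Rightarrow> bool" where
  "trans_tournament_arc u v \<longleftrightarrow> u < v"

definition H_T :: "nat \<Rightarrow> complex mat" where
  "H_T n = herm_adj n trans_tournament_arc"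

end

theory Submission imports Defs
begin

definition tmat :: "nat \<Rightarrow> 'a \<Rightarrow> 'a \<Rightarrow> 'a \<Rightarrow> 'a::comm_ring_1 mat" where
 "tmat n t a b = mat n n (\<lambda>(i,j). if i = j then t else if i < j then a else b)"

lemma tmat_carrier[simp]: "tmat n t a b \<in> carrier_mat n n"
  by (simp add: tmat_def)

lemma tmat_delete: "mat_delete (tmat (Suc m) t a b) m m = tmat m t a b"
  by (rule eq_matI) (auto simp: tmat_def mat_delete_def)

lemma sum_two:
  fixes f :: "nat \<Rightarrow> 'a::comm_ring_1"
  assumes "i < N" "m < N" "i \<noteq> m"
  shows "(\<Sum>k\<in>{0..<N}. (if k = i then x else if k = m then y else 0) * f k) = x * f i + y * f m"
proof -
  have "(\<Sum>k\<in>{0..<N}. (if k = i then x else if k = m then y else 0) * f k)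
       = (\<Sum>k\<in>{0..<N}. (if k = i then x * f i else 0) + (if k = m then y * f m else 0))"
    by (rule sum.cong) (use assms in auto)
  also have "\<dots> = x * f i + y * f m" using assms by (simp add: sum.distrib)
  finally show ?thesis .
qed

lemma det_ones_last:
  fixes t a b :: "'a::comm_ring_1" and m :: nat
  defines "Om \<equiv> mat (Suc m) (Suc m) (\<lambda>(i,j). if i = m then 1 else if i = j then t else if i < j then a else b)"
  shows "det Om = (t - a) ^ m"
proof -
  define E :: "'a mat" where "E = mat (Suc m) (Suc m) (\<lambda>(i,j). if i = j then 1 else if j = m then -a else 0)"
  have Om: "Om \<in> carrier_mat (Suc m) (Suc m)" by (simp add: Om_def)
  have E: "E \<in> carrier_mat (Suc m) (Suc m)" by (simp add: E_def)
  have dE: "det E = 1"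
    by (subst det_upper_triangular[OF _ E]) (auto simp: E_def upper_triangular_def prod_list_diag_prod)
  have EO: "(E * Om) $$ (i,j) = (if i = m then 1 else if j = i then t - a else if i < j then 0 else b - a)"
    if ij: "i < Suc m" "j < Suc m" for i j
  proof -
    have "(E * Om) $$ (i,j) = (\<Sum>k\<in>{0..<Suc m}. E $$ (i,k) * Om $$ (k,j))"
      using ij E Om by (simp add: scalar_prod_def)
    also have "\<dots> = (\<Sum>k\<in>{0..<Suc m}. (if k = i then 1 else if k = m then (if i = m then 0 else -a) else 0) * Om $$ (k,j))"
      by (rule sum.cong) (use ij in \<open>auto simp: E_def\<close>)
    finally have *: "(E * Om) $$ (i,j) = \<dots>" .
    show ?thesis
    proof (cases "i = m")
      case True
      have "(\<Sum>k\<in>{0..<Suc m}. (if k = i then 1 else if k = m then (if i = m then 0 else -a) else 0) * Om $$ (k,j))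
         = (\<Sum>k\<in>{0..<Suc m}. (if k = i then Om $$ (i,j) else 0))"
        by (rule sum.cong) (use True in auto)
      then show ?thesis using * True ij by (simp add: Om_def)
    next
      case False
      have "(E * Om) $$ (i,j) = 1 * Om $$ (i,j) + (-a) * Om $$ (m,j)"
        using * sum_two[of i "Suc m" m 1 "-a" "\<lambda>k. Om $$ (k,j)"] False ij by simp
      then show ?thesis using False ij by (auto simp: Om_def)
    qed
  qed
  have EOc: "E * Om \<in> carrier_mat (Suc m) (Suc m)" using E Om by simp
  have "det (E * Om) = prod_list (diag_mat (E * Om))"
    by (rule det_lower_triangular[OF _ EOc]) (simp add: EO)
  also have "\<dots> = (\<Prod>i = 0..<Suc m. (E * Om) $$ (i,i))"
    using EOc E by (simp add: prod_list_diag_prod carrier_matD)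
  also have "\<dots> = (\<Prod>i = 0..<m. (E * Om) $$ (i,i)) * (E * Om) $$ (m,m)"
    by (simp only: prod.atLeast0_lessThan_Suc)
  also have "\<dots> = (\<Prod>i = 0..<m. (t - a)) * 1"
    by (simp add: EO)
  finally have "det (E * Om) = (t - a) ^ m" by simp
  then show ?thesis using det_mult[OF E Om] dE by simp
qed

lemma det_tmat_Suc:
  fixes t a b :: "'a::comm_ring_1"
  shows "det (tmat (Suc m) t a b) = b * (t - a) ^ m + (t - b) * det (tmat m t a b)"
proof -
  define A where "A = tmat (Suc m) t a b"
  define Om :: "'a mat" where "Om = mat (Suc m) (Suc m) (\<lambda>(i,j). if i = m then 1 else if i = j then t else if i < j then a else b)"
  have A: "A \<in> carrier_mat (Suc m) (Suc m)" by (simp add: A_def)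
  have Om: "Om \<in> carrier_mat (Suc m) (Suc m)" by (simp add: Om_def)
  have cof: "cofactor A m j = cofactor Om m j" if "j < Suc m" for j
  proof -
    have "mat_delete A m j = mat_delete Om m j"
      by (rule eq_matI) (auto simp: A_def Om_def tmat_def mat_delete_def)
    then show ?thesis by (simp add: cofactor_def)
  qed
  have "det A = (\<Sum>j<Suc m. A $$ (m,j) * cofactor A m j)"
    by (rule laplace_expansion_row[OF A]) simp
  also have "\<dots> = (\<Sum>j<Suc m. b * cofactor Om m j + (if j = m then (t - b) * cofactor A m m else 0))"
  proof (rule sum.cong[OF refl])
    fix j assume j: "j \<in> {..<Suc m}"
    have "A $$ (m,j) = (if j = m then t else b)" using j by (auto simp: A_def tmat_def)
    then show "A $$ (m,j) * cofactor A m j = b * cofactor Om m j + (if j = m then (t - b) * cofactor A m m else 0)"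
      using j cof[of j] by (auto simp: algebra_simps)
  qed
  also have "\<dots> = b * (\<Sum>j<Suc m. cofactor Om m j) + (t - b) * cofactor A m m"
    by (simp add: sum.distrib sum_distrib_left distrib_left)
  also have "(\<Sum>j<Suc m. cofactor Om m j) = (\<Sum>j<Suc m. Om $$ (m,j) * cofactor Om m j)"
    by (rule sum.cong) (auto simp: Om_def)
  also have "(\<Sum>j<Suc m. Om $$ (m,j) * cofactor Om m j) = det Om"
    by (rule laplace_expansion_row[OF Om, symmetric]) simp
  also have "det Om = (t - a) ^ m" unfolding Om_def by (rule det_ones_last)
  also have "cofactor A m m = det (tmat m t a b)"
    by (simp add: cofactor_def A_def tmat_delete)
  finally show ?thesis by (simp add: A_def)
qed

lemma det_tmat:
  fixes t a b :: "'a::comm_ring_1"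
  shows "(b - a) * det (tmat n t a b) = b * (t - a) ^ n - a * (t - b) ^ n"
proof (induction n)
  case 0
  then show ?case by (simp add: tmat_def)
next
  case (Suc n)
  have "(b - a) * det (tmat (Suc n) t a b) = (b - a) * b * (t - a) ^ n + (t - b) * ((b - a) * det (tmat n t a b))"
    by (simp add: det_tmat_Suc algebra_simps)
  also have "\<dots> = b * (t - a) ^ Suc n - a * (t - b) ^ Suc n"
    by (subst Suc.IH) (simp add: algebra_simps)
  finally show ?case .
qed

lemma part1:
  fixes n :: nat
  shows "(\<Sum>j = 0..n div 2. monom ((-1) ^ j * of_nat (n choose (2 * j))) (n - 2 * j))
    = Polynomial.smult (1/2) ([:\<i>, 1:] ^ n) + Polynomial.smult (1/2) ([:- \<i>, 1:] ^ n :: complex poly)"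
proof (rule poly_eqI)
  fix d
  show "coeff (\<Sum>j = 0..n div 2. monom ((-1) ^ j * of_nat (n choose (2 * j))) (n - 2 * j)) d
    = coeff (Polynomial.smult (1/2) ([:\<i>, 1:] ^ n) + Polynomial.smult (1/2) ([:- \<i>, 1:] ^ n :: complex poly)) d"
  proof (cases "d \<le> n")
    case False
    have d1: "degree ([:\<i>, 1:] ^ n :: complex poly) \<le> n"
      using degree_power_le[of "[:\<i>, 1:] :: complex poly" n] by simp
    have d2: "degree ([:-\<i>, 1:] ^ n :: complex poly) \<le> n"
      using degree_power_le[of "[:-\<i>, 1:] :: complex poly" n] by simp
    have "coeff ([:\<i>, 1:] ^ n :: complex poly) d = 0" "coeff ([:-\<i>, 1:] ^ n :: complex poly) d = 0"
      using False d1 d2 by (auto intro!: coeff_eq_0)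
    moreover have "coeff (\<Sum>j = 0..n div 2. monom ((-1) ^ j * of_nat (n choose (2 * j))) (n - 2 * j) :: complex poly) d = 0"
      unfolding coeff_sum coeff_monom by (rule sum.neutral) (use False in auto)
    ultimately show ?thesis by simp
  next
    case True
    have R: "coeff (Polynomial.smult (1/2) ([:\<i>, 1:] ^ n) + Polynomial.smult (1/2) ([:- \<i>, 1:] ^ n :: complex poly)) d
      = 1/2 * of_nat (n choose d) * (\<i> ^ (n - d) + (-\<i>) ^ (n - d))"
      using True by (simp add: coeff_linear_poly_power algebra_simps)
    show ?thesis
    proof (cases "even (n - d)")
      case True
      then obtain q where q: "n - d = 2 * q" by blast
      have "coeff (\<Sum>j = 0..n div 2. monom ((-1) ^ j * of_nat (n choose (2 * j))) (n - 2 * j) :: complex poly) d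
        = (\<Sum>j = 0..n div 2. (if j = q then (-1) ^ q * of_nat (n choose (2 * q)) else 0))"
        unfolding coeff_sum coeff_monom
        by (rule sum.cong) (use q \<open>d \<le> n\<close> in auto)
      also have "\<dots> = (-1) ^ q * of_nat (n choose (2 * q))"
      proof -
        have "q \<le> n div 2" using q by presburger
        then show ?thesis by simp
      qed
      also have "\<dots> = 1/2 * of_nat (n choose d) * (\<i> ^ (n - d) + (-\<i>) ^ (n - d))"
      proof -
        have "n choose (2 * q) = n choose d" using q \<open>d \<le> n\<close>
          by (metis binomial_symmetric diff_diff_cancel)
        moreover have "\<i> ^ (2 * q) = ((-1) ^ q :: complex)" "(-\<i>) ^ (2 * q) = ((-1) ^ q :: complex)"
          by (simp_all add: power_mult)
        ultimately show ?thesis using q by simp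
      qed
      finally show ?thesis unfolding R .
    next
      case False
      have "coeff (\<Sum>j = 0..n div 2. monom ((-1) ^ j * of_nat (n choose (2 * j))) (n - 2 * j) :: complex poly) d = 0"
        unfolding coeff_sum coeff_monom
        by (rule sum.neutral) (use False in auto)
      moreover have "(\<i> ^ (n - d) + (-\<i>) ^ (n - d) :: complex) = 0"
        using False by (simp add: power_minus_odd)
      ultimately show ?thesis using R by simp
    qed
  qed
qed

lemma cpm_H_T: "char_poly_matrix (H_T n) = tmat n [:0,1:] [:-\<i>:] [:\<i>:]"
  by (rule eq_matI) (auto simp: char_poly_matrix_def H_T_def herm_adj_def trans_tournament_arc_def tmat_def)

lemma H_T_carrier: "H_T n \<in> carrier_mat n n"
  by (simp add: H_T_def herm_adj_def)

lemma part2: "char_poly (H_T n) = Polynomial.smult (1/2) ([:\<i>, 1:] ^ n) + Polynomial.smult (1/2) ([:- \<i>, 1:] ^ n)"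
proof -
  define D where "D = char_poly (H_T n)"
  have "([:\<i>:] - [:-\<i>:]) * D = [:\<i>:] * ([:0,1:] - [:-\<i>:]) ^ n - [:-\<i>:] * ([:0,1:] - [:\<i>:]) ^ n"
    unfolding D_def char_poly_def cpm_H_T by (rule det_tmat)
  moreover have "[:\<i>:] - [:-\<i>:] = [:2 * \<i>:]" "[:0,1:] - [:-\<i>:] = [:\<i>,1:]" "[:0,1:] - [:\<i>:] = [:-\<i>,1:]"
    by simp_all
  ultimately have *: "[:2 * \<i>:] * D = Polynomial.smult \<i> ([:\<i>,1:] ^ n + [:-\<i>,1:] ^ n)"
    by (simp add: algebra_simps smult_add_right)
  have "D = Polynomial.smult (1 / (2 * \<i>)) ([:2 * \<i>:] * D)" by simp
  also have "\<dots> = Polynomial.smult (1/2) ([:\<i>,1:] ^ n + [:-\<i>,1:] ^ n)"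
    unfolding * by simp
  finally show ?thesis unfolding D_def by (simp add: smult_add_right)
qed

lemma proots_distinct:
  fixes p :: "'a::idom poly"
  assumes p0: "p \<noteq> 0" and dp: "degree p = n" and inj: "inj_on f {0..<n}"
    and root: "\<And>j. j < n \<Longrightarrow> poly p (f j) = 0"
  shows "proots p = image_mset f (mset [0..<n])"
proof -
  define M where "M = image_mset f (mset [0..<n])"
  have dist: "distinct (map f [0..<n])" using inj by (simp add: distinct_map)
  have M: "M = mset_set (f ` {0..<n})"
    unfolding M_def using mset_set_set[OF dist] by simp
  have sub: "M \<subseteq># proots p"
  proof (rule mset_subset_eqI)
    fix x
    show "count M x \<le> count (proots p) x"
    proof (cases "x \<in> f ` {0..<n}")
      case True
      then obtain j where "j < n" "x = f j" by auto
      then have "order x p \<noteq> 0" using root[of j] p0 order_root by blast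
      then show ?thesis using True p0 by (simp add: M)
    next
      case False
      then show ?thesis by (simp add: M)
    qed
  qed
  have sz: "size M = n" by (simp add: M_def)
  have "size (proots p) \<le> n" using size_proots_le[of p] dp by simp
  show ?thesis
  proof (rule ccontr)
    assume "proots p \<noteq> image_mset f (mset [0..<n])"
    then have "M \<subset># proots p" using sub unfolding M_def by (simp add: subset_mset.le_less)
    then have "size M < size (proots p)" by (rule mset_subset_size)
    then show False using sz \<open>size (proots p) \<le> n\<close> by simp
  qed
qed

lemma sin_sum_telescope:
  fixes \<theta> :: real
  shows "(\<Sum>k = 1..m. 2 * sin (real k * \<theta>)) * sin (\<theta>/2) = cos (\<theta>/2) - cos ((real m + 1/2) * \<theta>)"
proof (induction m)
  case 0
  then show ?case by simp
next
  case (Suc m)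
  have step: "2 * sin (real (Suc m) * \<theta>) * sin (\<theta>/2) = cos ((real m + 1/2) * \<theta>) - cos ((real (Suc m) + 1/2) * \<theta>)"
  proof -
    have a: "(real m + 1/2) * \<theta> = real (Suc m) * \<theta> - \<theta>/2" by (simp add: algebra_simps)
    have b: "(real (Suc m) + 1/2) * \<theta> = real (Suc m) * \<theta> + \<theta>/2" by (simp add: algebra_simps)
    show ?thesis unfolding a b cos_diff cos_add by simp
  qed
  have "(\<Sum>k = 1..Suc m. 2 * sin (real k * \<theta>)) * sin (\<theta>/2)
     = (\<Sum>k = 1..m. 2 * sin (real k * \<theta>)) * sin (\<theta>/2) + 2 * sin (real (Suc m) * \<theta>) * sin (\<theta>/2)"
    by (simp add: distrib_right)
  then show ?case using Suc.IH step by simp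
qed

lemma cos_half_odd: "cos (real (2 * j + 1) * pi / 2) = 0"
proof -
  have e: "real (2 * j + 1) * pi / 2 = real j * pi + pi / 2" by (simp add: algebra_simps)
  show ?thesis unfolding e by (simp add: cos_add)
qed

lemma sin_half_odd: "sin (real (2 * j + 1) * pi / 2) = (-1) ^ j"
proof -
  have e: "real (2 * j + 1) * pi / 2 = real j * pi + pi / 2" by (simp add: algebra_simps)
  show ?thesis unfolding e by (simp add: sin_add)
qed

lemma phi_bounds:
  assumes "j < n"
  shows "0 < real (2 * j + 1) * pi / (2 * real n)" "real (2 * j + 1) * pi / (2 * real n) < pi"
proof -
  have n: "0 < real n" using assms by simp
  show "0 < real (2 * j + 1) * pi / (2 * real n)" using n by simp
  have "real (2 * j + 1) < 2 * real n" using assms by linarith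
  then have "real (2 * j + 1) * pi < 2 * real n * pi" by simp
  then show "real (2 * j + 1) * pi / (2 * real n) < pi" using n by (simp add: divide_less_eq)
qed

lemma root_cot:
  assumes j: "j < n"
  defines "\<phi> \<equiv> real (2 * j + 1) * pi / (2 * real n)"
  shows "poly (Polynomial.smult (1/2) ([:\<i>, 1:] ^ n) + Polynomial.smult (1/2) ([:- \<i>, 1:] ^ n))
           (complex_of_real (cos \<phi> / sin \<phi>)) = 0"
proof -
  have s: "sin \<phi> > 0" unfolding \<phi>_def using phi_bounds[OF j] by (intro sin_gt_zero) auto
  define x where "x = complex_of_real (cos \<phi> / sin \<phi>)"
  have xp: "x + \<i> = cis \<phi> / complex_of_real (sin \<phi>)"
    using s by (simp add: complex_eq_iff x_def Re_divide Im_divide power2_eq_square)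
  have xm: "x + - \<i> = cis (-\<phi>) / complex_of_real (sin \<phi>)"
    using s by (simp add: complex_eq_iff x_def Re_divide Im_divide power2_eq_square)
  have nphi: "real n * \<phi> = real (2 * j + 1) * pi / 2" unfolding \<phi>_def using j by (simp add: field_simps)
  have c2: "cis a + cis (-a) = 2 * complex_of_real (cos a)" for a
    by (simp add: complex_eq_iff)
  have "poly (Polynomial.smult (1/2) ([:\<i>, 1:] ^ n) + Polynomial.smult (1/2) ([:- \<i>, 1:] ^ n)) x
     = 1/2 * (x + \<i>) ^ n + 1/2 * (x + - \<i>) ^ n"
    by (simp add: poly_power algebra_simps)
  also have "\<dots> = 1/2 * ((cis (real n * \<phi>) + cis (- (real n * \<phi>))) / complex_of_real (sin \<phi>) ^ n)"
    unfolding xp xm power_divide DeMoivre by (simp add: add_divide_distrib algebra_simps)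
  also have "\<dots> = 0" unfolding c2 nphi cos_half_odd by simp
  finally show ?thesis unfolding x_def .
qed

lemma cot_inj_aux:
  assumes jk: "j < k" "k < n"
  shows "cos (real (2 * j + 1) * pi / (2 * real n)) / sin (real (2 * j + 1) * pi / (2 * real n))
      \<noteq> cos (real (2 * k + 1) * pi / (2 * real n)) / sin (real (2 * k + 1) * pi / (2 * real n))"
proof
  define a where "a = real (2 * j + 1) * pi / (2 * real n)"
  define b where "b = real (2 * k + 1) * pi / (2 * real n)"
  have a: "0 < a" "a < pi" unfolding a_def using phi_bounds[of j n] jk by auto
  have b: "0 < b" "b < pi" unfolding b_def using phi_bounds[of k n] jk by auto
  have n: "0 < real n" using jk by simp
  have "real (2 * j + 1) < real (2 * k + 1)" using jk by simp
  then have "real (2 * j + 1) * pi / (2 * real n) < real (2 * k + 1) * pi / (2 * real n)"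
    using n by (intro divide_strict_right_mono mult_strict_right_mono) auto
  then have ab: "a < b" unfolding a_def b_def .
  assume "cos (real (2 * j + 1) * pi / (2 * real n)) / sin (real (2 * j + 1) * pi / (2 * real n))
      = cos (real (2 * k + 1) * pi / (2 * real n)) / sin (real (2 * k + 1) * pi / (2 * real n))"
  then have eq: "cos a / sin a = cos b / sin b" unfolding a_def b_def .
  have sa: "sin a > 0" using a by (intro sin_gt_zero) auto
  have sb: "sin b > 0" using b by (intro sin_gt_zero) auto
  have "sin b * cos a - cos b * sin a = 0" using eq sa sb by (simp add: field_simps)
  then have "sin (b - a) = 0" by (simp add: sin_diff)
  moreover have "sin (b - a) > 0" using a b ab by (intro sin_gt_zero) auto
  ultimately show False by simp
qed

lemma cot_inj: "inj_on (\<lambda>j. cos (real (2 * j + 1) * pi / (2 * real n)) / sin (real (2 * j + 1) * pi / (2 * real n))) {0..<n}"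
proof (rule inj_onI)
  fix j k assume j: "j \<in> {0..<n}" and k: "k \<in> {0..<n}"
    and eq: "cos (real (2 * j + 1) * pi / (2 * real n)) / sin (real (2 * j + 1) * pi / (2 * real n))
      = cos (real (2 * k + 1) * pi / (2 * real n)) / sin (real (2 * k + 1) * pi / (2 * real n))"
  show "j = k"
  proof (rule ccontr)
    assume "j \<noteq> k"
    then have "j < k \<or> k < j" by arith
    then show False using cot_inj_aux[of j k n] cot_inj_aux[of k j n] eq j k by auto
  qed
qed

lemma sum_odd:
  assumes j: "j < n" and odd: "odd n"
  defines "\<phi> \<equiv> real (2 * j + 1) * pi / (2 * real n)"
  shows "(\<Sum>k = 1..(n - 1) div 2. 2 * sin (real (k * (2 * j + 1)) * pi / real n)) = cos \<phi> / sin \<phi>"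
proof -
  define \<theta> where "\<theta> = real (2 * j + 1) * pi / real n"
  have s: "sin \<phi> > 0" unfolding \<phi>_def using phi_bounds[OF j] by (intro sin_gt_zero) auto
  have n: "real n > 0" using j by simp
  have th2: "\<theta> / 2 = \<phi>" unfolding \<theta>_def \<phi>_def by simp
  have terms: "(\<Sum>k = 1..(n - 1) div 2. 2 * sin (real (k * (2 * j + 1)) * pi / real n))
      = (\<Sum>k = 1..(n - 1) div 2. 2 * sin (real k * \<theta>))"
    by (rule sum.cong) (simp_all add: \<theta>_def algebra_simps)
  have m: "real ((n - 1) div 2) = (real n - 1) / 2"
  proof -
    have n1: "n \<ge> 1" using j by simp
    have "2 * ((n - 1) div 2) = n - 1" using odd n1 by presburger
    then have "2 * real ((n - 1) div 2) = real n - 1" using n1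
      by (metis of_nat_1 of_nat_diff of_nat_mult of_nat_numeral)
    then show ?thesis by simp
  qed
  have e: "(real ((n - 1) div 2) + 1/2) * \<theta> = real (2 * j + 1) * pi / 2"
    unfolding m \<theta>_def using n by (simp add: field_simps)
  have c: "cos ((real ((n - 1) div 2) + 1/2) * \<theta>) = 0" unfolding e by (rule cos_half_odd)
  have "(\<Sum>k = 1..(n - 1) div 2. 2 * sin (real k * \<theta>)) * sin \<phi> = cos \<phi>"
    using sin_sum_telescope[of \<theta> "(n - 1) div 2"] unfolding th2 c by simp
  then show ?thesis unfolding terms using s by (simp add: field_simps)
qed

lemma sum_even:
  assumes j: "j < n" and ev: "even n"
  defines "\<phi> \<equiv> real (2 * j + 1) * pi / (2 * real n)"
  shows "(-1) ^ j + (\<Sum>k = 1..(n - 2) div 2. 2 * sin (real (k * (2 * j + 1)) * pi / real n)) = cos \<phi> / sin \<phi>"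
proof -
  define \<theta> where "\<theta> = real (2 * j + 1) * pi / real n"
  have s: "sin \<phi> > 0" unfolding \<phi>_def using phi_bounds[OF j] by (intro sin_gt_zero) auto
  have n: "real n > 0" using j by simp
  have n2: "n \<ge> 2" using j ev by presburger
  have th2: "\<theta> / 2 = \<phi>" unfolding \<theta>_def \<phi>_def by simp
  have terms: "(\<Sum>k = 1..(n - 2) div 2. 2 * sin (real (k * (2 * j + 1)) * pi / real n))
      = (\<Sum>k = 1..(n - 2) div 2. 2 * sin (real k * \<theta>))"
    by (rule sum.cong) (simp_all add: \<theta>_def algebra_simps)
  have m: "real ((n - 2) div 2) = (real n - 2) / 2"
  proof -
    have "2 * ((n - 2) div 2) = n - 2" using ev n2 by presburger
    then have "2 * real ((n - 2) div 2) = real n - 2" using n2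
      by (metis of_nat_diff of_nat_mult of_nat_numeral)
    then show ?thesis by simp
  qed
  have e: "(real ((n - 2) div 2) + 1/2) * \<theta> = real (2 * j + 1) * pi / 2 - \<phi>"
    unfolding m \<theta>_def \<phi>_def using n by (simp add: field_simps)
  have c: "cos ((real ((n - 2) div 2) + 1/2) * \<theta>) = (-1) ^ j * sin \<phi>"
    unfolding e cos_diff cos_half_odd sin_half_odd by simp
  have "(\<Sum>k = 1..(n - 2) div 2. 2 * sin (real k * \<theta>)) * sin \<phi> = cos \<phi> - (-1) ^ j * sin \<phi>"
    using sin_sum_telescope[of \<theta> "(n - 2) div 2"] unfolding th2 c by simp
  then show ?thesis unfolding terms using s by (simp add: field_simps)
qed

lemma roots_general:
  fixes f :: "nat \<Rightarrow> real"
  assumes f: "\<And>j. j < n \<Longrightarrow> f j = cos (real (2 * j + 1) * pi / (2 * real n)) / sin (real (2 * j + 1) * pi / (2 * real n))"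
  shows "proots (char_poly (H_T n)) = image_mset (\<lambda>j. complex_of_real (f j)) (mset [0..<n])"
proof (rule proots_distinct)
  have dm: "degree (char_poly (H_T n)) = n \<and> coeff (char_poly (H_T n)) n = 1"
    by (rule degree_monic_char_poly[OF H_T_carrier])
  then show "char_poly (H_T n) \<noteq> 0" by auto
  show "degree (char_poly (H_T n)) = n" using dm by simp
  show "inj_on (\<lambda>j. complex_of_real (f j)) {0..<n}"
  proof (rule inj_onI)
    fix j k assume j: "j \<in> {0..<n}" and k: "k \<in> {0..<n}"
      and "complex_of_real (f j) = complex_of_real (f k)"
    then have "f j = f k" by simp
    then show "j = k" using inj_onD[OF cot_inj[of n], of j k] j k f[of j] f[of k] by auto
  qed
  fix j assume j: "j < n"
  show "poly (char_poly (H_T n)) (complex_of_real (f j)) = 0"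
    unfolding part2 f[OF j] by (rule root_cot[OF j])
qed

theorem theorem10p5:
  fixes n :: nat
  shows "char_poly (H_T n) =
           (\<Sum>j = 0..n div 2. monom ((-1) ^ j * of_nat (n choose (2 * j))) (n - 2 * j))
    \<and> char_poly (H_T n) = Polynomial.smult (1/2) ([:\<i>, 1:] ^ n) + Polynomial.smult (1/2) ([:- \<i>, 1:] ^ n)
    \<and> (odd n \<longrightarrow> proots (char_poly (H_T n)) =
           image_mset (\<lambda>j. complex_of_real
              (\<Sum>k = 1..(n - 1) div 2. 2 * sin (real (k * (2 * j + 1)) * pi / real n)))
             (mset [0..<n]))
    \<and> (even n \<longrightarrow> proots (char_poly (H_T n)) =
           image_mset (\<lambda>j. complex_of_real
              ((-1) ^ j + (\<Sum>k = 1..(n - 2) div 2. 2 * sin (real (k * (2 * j + 1)) * pi / real n))))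
             (mset [0..<n]))"
proof (intro conjI impI)
  show "char_poly (H_T n) = (\<Sum>j = 0..n div 2. monom ((-1) ^ j * of_nat (n choose (2 * j))) (n - 2 * j))"
    unfolding part2 part1 ..
  show "char_poly (H_T n) = Polynomial.smult (1/2) ([:\<i>, 1:] ^ n) + Polynomial.smult (1/2) ([:- \<i>, 1:] ^ n)"
    by (rule part2)
  assume "odd n"
  then show "proots (char_poly (H_T n)) =
           image_mset (\<lambda>j. complex_of_real
              (\<Sum>k = 1..(n - 1) div 2. 2 * sin (real (k * (2 * j + 1)) * pi / real n)))
             (mset [0..<n])"
    by (intro roots_general sum_odd)
next
  assume "even n"
  then show "proots (char_poly (H_T n)) =
           image_mset (\<lambda>j. complex_of_real
              ((-1) ^ j + (\<Sum>k = 1..(n - 2) div 2. 2 * sin (real (k * (2 * j + 1)) * pi / real n))))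
             (mset [0..<n])"
    by (intro roots_general sum_even)
qed

end
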